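(* For each $\sigma\in\{132,213,312,3142\}$ and every $n\ge 0$, we have $F_n(321,\sigma)=S_n(231,321,\sigma)$.
   Context: A permutation of length $n$ is a rearrangement of $[n]$; $S_n$ is the set of all of them. A permutation $\pi$ avoids a classical pattern $p\in S_k$ if no subsequence of $\pi$ of length $k$ is order-isomorphic to $p$. A Fishburn permutation is a permutation $\pi=\pi_1\cdots\pi_n$ for which there are no indices $i<j$ with $\pi_j<\pi_i<\pi_{i+1}$ and $\pi_i=\pi_j+1$. $F_n(\sigma_1,\dots,\sigma_k)$ denotes the set of Fishburn permutations of length $n$ avoiding each of the classical patterns $\sigma_1,\dots,\sigma_k$, and $S_n(\sigma_1,\dots,\sigma_k)$ the set of all permutations of length $n$ avoiding each $\sigma_i$. *)

theory Defs
  imports Main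
begin

definition perms :: "nat \<Rightarrow> nat list set" where
  "perms n = {\<pi>. distinct \<pi> \<and> set \<pi> = {1..n}}"

definition contains :: "nat list \<Rightarrow> nat list \<Rightarrow> bool" where
  "contains \<pi> p \<longleftrightarrow> (\<exists>is. length is = length p \<and> sorted_wrt (<) is \<and>
      (\<forall>i\<in>set is. i < length \<pi>) \<and>
      (\<forall>a<length p. \<forall>b<length p. (\<pi> ! (is ! a) < \<pi> ! (is ! b)) \<longleftrightarrow> (p ! a < p ! b)))"

definition avoids :: "nat list \<Rightarrow> nat list \<Rightarrow> bool" where
  "avoids \<pi> p \<longleftrightarrow> \<not> contains \<pi> p"

definition fishburn :: "nat list \<Rightarrow> bool" where
  "fishburn \<pi> \<longleftrightarrow> \<not> (\<exists>i j. i < j \<and> j < length \<pi> \<and> Suc i < length \<pi> \<and>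
      \<pi> ! j < \<pi> ! i \<and> \<pi> ! i < \<pi> ! Suc i \<and> \<pi> ! i = \<pi> ! j + 1)"

definition S_av :: "nat \<Rightarrow> nat list list \<Rightarrow> nat list set" where
  "S_av n ps = {\<pi> \<in> perms n. \<forall>p\<in>set ps. avoids \<pi> p}"

definition F_av :: "nat \<Rightarrow> nat list list \<Rightarrow> nat list set" where
  "F_av n ps = {\<pi> \<in> perms n. fishburn \<pi> \<and> (\<forall>p\<in>set ps. avoids \<pi> p)}"

end

theory Submission
  imports Defs
begin

lemma all3: "(\<forall>a<(3::nat). P a) \<longleftrightarrow> P 0 \<and> P 1 \<and> P 2"
  unfolding numeral_3_eq_3 numeral_2_eq_2 by (auto simp: less_Suc_eq)

lemma all4: "(\<forall>a<(4::nat). P a) \<longleftrightarrow> P 0 \<and> P 1 \<and> P 2 \<and> P 3"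
proof -
  have "(4::nat) = Suc (Suc (Suc (Suc 0)))" "(3::nat) = Suc (Suc (Suc 0))" "(2::nat) = Suc (Suc 0)" by auto
  thus ?thesis by (simp only:) (auto simp: less_Suc_eq)
qed

lemma contains3I:
  assumes "i < j" "j < k" "k < length \<pi>"
    and "\<forall>a<3. \<forall>b<3. (\<pi> ! ([i,j,k] ! a) < \<pi> ! ([i,j,k] ! b)) \<longleftrightarrow> (p ! a < p ! b)"
    and "length p = 3"
  shows "contains \<pi> p"
  unfolding contains_def
  apply (rule exI[of _ "[i,j,k]"])
  using assms by auto

lemma contains4I:
  assumes "i < j" "j < k" "k < l" "l < length \<pi>"
    and "\<forall>a<4. \<forall>b<4. (\<pi> ! ([i,j,k,l] ! a) < \<pi> ! ([i,j,k,l] ! b)) \<longleftrightarrow> (p ! a < p ! b)"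
    and "length p = 4"
  shows "contains \<pi> p"
  unfolding contains_def
  apply (rule exI[of _ "[i,j,k,l]"])
  using assms by auto

lemma contains231D:
  assumes "contains \<pi> [2,3,1]"
  shows "\<exists>a b c. a < b \<and> b < c \<and> c < length \<pi> \<and> \<pi>!c < \<pi>!a \<and> \<pi>!a < \<pi>!b"
proof -
  obtain "is" where h0: "length is = length [2,3,1::nat]" "sorted_wrt (<) is" "\<forall>i\<in>set is. i < length \<pi>"
    "\<forall>a<length [2,3,1::nat]. \<forall>b<length [2,3,1::nat]. (\<pi> ! (is ! a) < \<pi> ! (is ! b)) \<longleftrightarrow> ([2,3,1::nat] ! a < [2,3,1::nat] ! b)"
    using assms unfolding contains_def by (elim exE conjE) (rule that)
  have L: "length [2,3,1::nat] = 3" by simp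
  note h = h0[unfolded L]
  have 1: "\<pi> ! (is ! 2) < \<pi> ! (is ! 0)" using h(4)[rule_format, of 2 0] by simp
  have 2: "\<pi> ! (is ! 0) < \<pi> ! (is ! 1)" using h(4)[rule_format, of 0 1] by simp
  have 3: "is ! 0 < is ! 1" "is ! 1 < is ! 2"
    using sorted_wrt_nth_less[OF h(2), of 0 1] sorted_wrt_nth_less[OF h(2), of 1 2] h(1) by simp_all
  have 4: "is ! 2 < length \<pi>" using h(3) h(1) nth_mem[of 2 "is"] by auto
  show ?thesis using 1 2 3 4 by blast
qed

lemma fish_of_231:
  assumes "avoids \<pi> [2,3,1]" shows "fishburn \<pi>"
  unfolding fishburn_def
proof
  assume "\<exists>i j. i < j \<and> j < length \<pi> \<and> Suc i < length \<pi> \<and>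
      \<pi> ! j < \<pi> ! i \<and> \<pi> ! i < \<pi> ! Suc i \<and> \<pi> ! i = \<pi> ! j + 1"
  then obtain i j where h: "i < j" "j < length \<pi>" "Suc i < length \<pi>"
      "\<pi> ! j < \<pi> ! i" "\<pi> ! i < \<pi> ! Suc i" by blast
  have "j \<noteq> Suc i" using h by auto
  hence "Suc i < j" using h by auto
  have "contains \<pi> [2,3,1]"
    apply (rule contains3I[of i "Suc i" j])
    using h \<open>Suc i < j\<close> by (auto simp: all3)
  thus False using assms unfolding avoids_def by auto
qed

lemma key:
  assumes d: "distinct \<pi>" and s: "set \<pi> = {1..n}" and f: "fishburn \<pi>"
    and av: "avoids \<pi> [3,2,1]"
  shows "\<forall>a b c. a < b \<and> b < c \<and> c < length \<pi> \<and> \<pi>!c < \<pi>!a \<and> \<pi>!a < \<pi>!b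
      \<and> \<pi>!a - \<pi>!c = k \<longrightarrow>
     (\<exists>a b c. Suc a < b \<and> b < c \<and> c < length \<pi> \<and> \<pi>!(Suc a) < \<pi>!c \<and> \<pi>!c < \<pi>!a \<and> \<pi>!a < \<pi>!b)"
proof (induction k rule: less_induct)
  case (less k)
  show ?case
  proof (intro allI impI)
    fix a b c
    assume h: "a < b \<and> b < c \<and> c < length \<pi> \<and> \<pi>!c < \<pi>!a \<and> \<pi>!a < \<pi>!b \<and> \<pi>!a - \<pi>!c = k"
    have neq: "\<And>i j. i < length \<pi> \<Longrightarrow> j < length \<pi> \<Longrightarrow> (\<pi>!i = \<pi>!j) = (i = j)"
      using d nth_eq_iff_index_eq by blast
    show "\<exists>a b c. Suc a < b \<and> b < c \<and> c < length \<pi> \<and> \<pi>!(Suc a) < \<pi>!c \<and> \<pi>!c < \<pi>!a \<and> \<pi>!a < \<pi>!b"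
    proof (cases "\<pi>!a = Suc (\<pi>!c)")
      case True
      have "Suc a < length \<pi>" using h by auto
      have "\<not> \<pi>!a < \<pi>!Suc a" using f h True \<open>Suc a < length \<pi>\<close> unfolding fishburn_def
        by (metis Suc_eq_plus1 order.strict_trans)
      have "Suc a \<noteq> b" using h \<open>\<not> \<pi>!a < \<pi>!Suc a\<close> by auto
      hence sb: "Suc a < b" using h by auto
      have "\<pi>!Suc a \<noteq> \<pi>!a" using neq[of "Suc a" a] h by auto
      moreover have "\<pi>!Suc a \<noteq> \<pi>!c" using neq[of "Suc a" c] h sb by auto
      ultimately have "\<pi>!Suc a < \<pi>!c" using \<open>\<not> \<pi>!a < \<pi>!Suc a\<close> True by auto
      thus ?thesis using h sb by blast
    next
      case False
      have "\<pi>!a \<in> set \<pi>" using h by auto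
      hence "\<pi>!a \<le> n" using s by auto
      hence "Suc (\<pi>!c) \<in> set \<pi>" using s h by auto
      then obtain e where e: "e < length \<pi>" "\<pi>!e = Suc (\<pi>!c)" by (metis in_set_conv_nth)
      have ltk: "\<pi>!a - \<pi>!e < k" using h False e by auto
      consider "e < a" | "e = a" | "a < e \<and> e < c" | "e = c" | "c < e" by linarith
      then show ?thesis
      proof cases
        case 1
        have "\<pi>!e - \<pi>!c < k" using h False e by auto
        moreover have "e < b \<and> b < c \<and> c < length \<pi> \<and> \<pi>!c < \<pi>!e \<and> \<pi>!e < \<pi>!b"
          using h e 1 False by auto
        ultimately show ?thesis using less.IH[of "\<pi>!e - \<pi>!c"] by blast
      next
        case 2 thus ?thesis using e False by auto
      next
        case 3
        have "e \<noteq> b" using h e by auto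
        have "contains \<pi> [3,2,1]"
          apply (rule contains3I[of a e c])
          using h e 3 False by (auto simp: all3)
        thus ?thesis using av unfolding avoids_def by auto
      next
        case 4 thus ?thesis using e by auto
      next
        case 5
        have "\<pi>!e < \<pi>!a" using False h e by auto
        moreover have "a < b \<and> b < e \<and> e < length \<pi> \<and> \<pi>!e < \<pi>!a \<and> \<pi>!a < \<pi>!b"
          using h e 5 False by auto
        ultimately show ?thesis using less.IH[of "\<pi>!a - \<pi>!e"] ltk by blast
      qed
    qed
  qed
qed

theorem mainTheorem2:
  fixes \<sigma> :: "nat list" and n :: nat
  assumes "\<sigma> \<in> {[1,3,2], [2,1,3], [3,1,2], [3,1,4,2]}"
  shows "F_av n [[3,2,1], \<sigma>] = S_av n [[2,3,1], [3,2,1], \<sigma>]"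
proof
  show "S_av n [[2,3,1], [3,2,1], \<sigma>] \<subseteq> F_av n [[3,2,1], \<sigma>]"
    unfolding S_av_def F_av_def using fish_of_231 by auto
next
  show "F_av n [[3,2,1], \<sigma>] \<subseteq> S_av n [[2,3,1], [3,2,1], \<sigma>]"
  proof
    fix \<pi> assume "\<pi> \<in> F_av n [[3,2,1], \<sigma>]"
    hence p: "\<pi> \<in> perms n" "fishburn \<pi>" "avoids \<pi> [3,2,1]" "avoids \<pi> \<sigma>"
      unfolding F_av_def by auto
    have "avoids \<pi> [2,3,1]"
    proof (rule ccontr)
      assume "\<not> avoids \<pi> [2,3,1]"
      then obtain a b c where abc: "a < b \<and> b < c \<and> c < length \<pi> \<and> \<pi>!c < \<pi>!a \<and> \<pi>!a < \<pi>!b"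
        using contains231D unfolding avoids_def by blast
      then obtain a b c where w: "Suc a < b" "b < c" "c < length \<pi>" "\<pi>!(Suc a) < \<pi>!c"
          "\<pi>!c < \<pi>!a" "\<pi>!a < \<pi>!b"
        using key[of \<pi> n "\<pi>!a - \<pi>!c"] p unfolding perms_def by blast
      have "contains \<pi> \<sigma>"
        using assms
      proof (elim insertE emptyE)
        assume "\<sigma> = [1,3,2]" thus ?thesis
          apply - apply (rule contains3I[of "Suc a" b c]) using w by (auto simp: all3)
      next
        assume "\<sigma> = [2,1,3]" thus ?thesis
          apply - apply (rule contains3I[of a "Suc a" b]) using w by (auto simp: all3)
      next
        assume "\<sigma> = [3,1,2]" thus ?thesis
          apply - apply (rule contains3I[of a "Suc a" c]) using w by (auto simp: all3)
      next
        assume "\<sigma> = [3,1,4,2]" thus ?thesis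
          apply - apply (rule contains4I[of a "Suc a" b c]) using w by (auto simp: all4)
      qed
      thus False using p unfolding avoids_def by auto
    qed
    thus "\<pi> \<in> S_av n [[2,3,1], [3,2,1], \<sigma>]" using p unfolding S_av_def by auto
  qed
qed

end
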